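(* Let $h>0$, $N\ge2$, $a\in\mathcal{A}_N$, $\phi:\mathbb{R}\to[0,\infty)$, and let $(U^N_t)$ be the $N$-actor system in the representation described in the context. For $\lambda>0$ let $(T_n^\lambda)_{n\ge1}$ be the successive jump times of the Poisson process $t\mapsto\mathbf{N}^a([0,t]\times[0,\lambda])$. Let $l>0$ with $M^>(l)>0$. Then for every $n\ge 1$, $$|U^N_{T_n^{M^>(l)}}(a)|\le l.$$
   Context: $\mathcal{A}_N=\{1,\dots,N\}$. $\Phi(r)=\phi(r)+\phi(-r)$ and $M^>(l)=\inf\{\Phi(r): r>l\}$. Let $(\mathbf{N}^b: b\in\mathcal{A}_N)$ be an i.i.d. family of Poisson random measures on $\mathbb{R}^+\times\mathbb{R}^+$ with intensity $ds\,dz$, and let the system (with arbitrary real initial values) solve, for each $a$, $$U_t^{N}(a)=U_0^{N}(a)-\int_0^t \int_0^{\infty} U_{s-}^{N}(a)\mathbf{1}\{z \leq \Phi(U_{s-}^{N}(a))\}\mathbf{N}^{a}(ds,dz)+ \frac{h}{N}\sum_{b\neq a}\int_0^t \int_0^{\infty}\big(\mathbf{1}\{z \leq \phi(U_{s-}^{N}(b))\}-\mathbf{1}\{\phi(U_{s-}^{N}(b))<z \leq \Phi(U_{s-}^{N}(b))\}\big)\mathbf{N}^{b}(ds,dz).$$ *)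

theory Defs
  imports "HOL-Probability.Probability"
begin

definition quadrant :: "(real \<times> real) set" where
  "quadrant = {0..} \<times> {0..}"

definition fin_borel :: "(real \<times> real) set \<Rightarrow> bool" where
  "fin_borel A \<longleftrightarrow> A \<in> sets lborel \<and> A \<subseteq> quadrant \<and> emeasure lborel A < \<infinity>"

text \<open>A (simple) point process on the quadrant is represented by its random set of atoms
  P b \<omega>; the counting measure N^b(A) is card (P b \<omega> \<inter> A).
  iid_PRM M I P: (P b)_{b in I} is an i.i.d. family of Poisson random measures with
  intensity ds dz (Lebesgue measure) on the quadrant.\<close>
definition iid_PRM ::
  "'w measure \<Rightarrow> 'i set \<Rightarrow> ('i \<Rightarrow> 'w \<Rightarrow> (real \<times> real) set) \<Rightarrow> bool" where
  "iid_PRM M I P \<longleftrightarrow>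
     (\<forall>b\<in>I. \<forall>\<omega>\<in>space M. P b \<omega> \<subseteq> quadrant) \<and>
     (\<forall>b\<in>I. \<forall>A. fin_borel A \<longrightarrow>
        (AE \<omega> in M. finite (P b \<omega> \<inter> A)) \<and>
        (\<lambda>\<omega>. card (P b \<omega> \<inter> A)) \<in> measurable M (count_space UNIV) \<and>
        (\<forall>k::nat. measure M {\<omega>\<in>space M. card (P b \<omega> \<inter> A) = k}
            = (measure lborel A) ^ k / fact k * exp (- measure lborel A))) \<and>
     (\<forall>F. finite F \<longrightarrow> (\<forall>(b,A)\<in>F. b \<in> I \<and> fin_borel A) \<longrightarrow>
        (\<forall>(b,A)\<in>F. \<forall>(b',A')\<in>F. b = b' \<and> A \<noteq> A' \<longrightarrow> A \<inter> A' = {}) \<longrightarrow>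
        prob_space.indep_vars M (\<lambda>_. count_space UNIV) (\<lambda>(b,A) \<omega>. card (P b \<omega> \<inter> A)) F)"

definition Phi :: "(real \<Rightarrow> real) \<Rightarrow> real \<Rightarrow> real" where
  "Phi \<phi> r = \<phi> r + \<phi> (- r)"

definition Mgt :: "(real \<Rightarrow> real) \<Rightarrow> real \<Rightarrow> real" where
  "Mgt \<phi> l = Inf (Phi \<phi> ` {l<..})"

definition left_lim :: "(real \<Rightarrow> real) \<Rightarrow> real \<Rightarrow> real" where
  "left_lim f s = (if s \<le> 0 then f 0 else Lim (at_left s) f)"

definition active_atoms ::
  "(real \<Rightarrow> real) \<Rightarrow> (real \<times> real) set \<Rightarrow> (real \<Rightarrow> real) \<Rightarrow> real \<Rightarrow> (real \<times> real) set" where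
  "active_atoms \<phi> Q u t = {(s,z) \<in> Q. 0 < s \<and> s \<le> t \<and> z \<le> Phi \<phi> (left_lim u s)}"

text \<open>Pathwise meaning of "the system with atom sets Q solves the equation":
  for each actor the path is cadlag on [0,oo), the integrals against the Poisson
  random measures are finite sums over the (finitely many) relevant atoms, and the
  equation holds for all t \<ge> 0.\<close>
definition solves_system ::
  "nat \<Rightarrow> real \<Rightarrow> (real \<Rightarrow> real) \<Rightarrow> (nat \<Rightarrow> (real \<times> real) set) \<Rightarrow> (real \<Rightarrow> nat \<Rightarrow> real) \<Rightarrow> bool" where
  "solves_system N h \<phi> Q U \<longleftrightarrow>
     (\<forall>a\<in>{1..N}.
        (\<forall>t\<ge>0. continuous (at_right t) (\<lambda>s. U s a)) \<and>
        (\<forall>t>0. \<exists>L. ((\<lambda>s. U s a) \<longlongrightarrow> L) (at_left t)) \<and>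
        (\<forall>t\<ge>0. finite (active_atoms \<phi> (Q a) (\<lambda>s. U s a) t))) \<and>
     (\<forall>a\<in>{1..N}. \<forall>t\<ge>0.
        U t a = U 0 a
          - (\<Sum>(s,z)\<in>active_atoms \<phi> (Q a) (\<lambda>s. U s a) t.
               left_lim (\<lambda>s. U s a) s * (if z \<le> Phi \<phi> (left_lim (\<lambda>s. U s a) s) then 1 else 0))
          + h / real N * (\<Sum>b\<in>{1..N} - {a}.
               (\<Sum>(s,z)\<in>active_atoms \<phi> (Q b) (\<lambda>s. U s b) t.
                  (if z \<le> \<phi> (left_lim (\<lambda>s. U s b) s) then 1 else 0)
                - (if \<phi> (left_lim (\<lambda>s. U s b) s) < z \<and> z \<le> Phi \<phi> (left_lim (\<lambda>s. U s b) s)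
                   then 1 else 0))))"

definition jump_time :: "(real \<times> real) set \<Rightarrow> real \<Rightarrow> nat \<Rightarrow> real" where
  "jump_time Q lam n = Inf {t. 0 \<le> t \<and> n \<le> card (Q \<inter> ({0..t} \<times> {0..lam}))}"

end

theory Submission
  imports Defs
begin


lemma fin_borel_Times:
  fixes A B :: "real set"
  assumes "A \<in> sets lborel" "B \<in> sets lborel" "A \<subseteq> {0..}" "B \<subseteq> {0..}"
    "emeasure lborel A < \<infinity>" "emeasure lborel B < \<infinity>"
  shows "fin_borel (A \<times> B)" "measure lborel (A \<times> B) = measure lborel A * measure lborel B"
proof -
  have s: "A \<times> B \<in> sets lborel"
    using assms(1,2) by (metis lborel_prod pair_measureI)
  have e: "emeasure lborel (A \<times> B) = emeasure lborel A * emeasure lborel B"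
    by (metis assms(1,2) lborel.emeasure_pair_measure_Times lborel_prod)
  have f: "emeasure lborel (A \<times> B) < \<infinity>"
    using e assms(5,6) by (simp add: ennreal_mult_less_top)
  show "fin_borel (A \<times> B)" using s f assms(3,4) unfolding fin_borel_def quadrant_def by auto
  show "measure lborel (A \<times> B) = measure lborel A * measure lborel B"
    unfolding measure_def e by (simp add: enn2real_mult)
qed

lemma fin_borel_box1:
  fixes a b c d :: real
  assumes "0 \<le> a" "0 \<le> c" "a \<le> b" "c \<le> d"
  shows "fin_borel ({a..b} \<times> {c..d})" "measure lborel ({a..b} \<times> {c..d}) = (b - a) * (d - c)"
  using fin_borel_Times[of "{a..b}" "{c..d}"] assms by auto

lemma fin_borel_box2:
  fixes a b c d :: real
  assumes "0 \<le> a" "0 \<le> c" "a \<le> b" "c \<le> d"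
  shows "fin_borel ({a<..b} \<times> {c..d})" "measure lborel ({a<..b} \<times> {c..d}) = (b - a) * (d - c)"
proof -
  have "{a<..b} \<subseteq> {0..}" using assms by auto
  then show "fin_borel ({a<..b} \<times> {c..d})" "measure lborel ({a<..b} \<times> {c..d}) = (b - a) * (d - c)"
    using fin_borel_Times[of "{a<..b}" "{c..d}"] assms by auto
qed

lemma iid_indep:
  assumes "iid_PRM M I P" "finite F" "\<forall>(b,A)\<in>F. b \<in> I \<and> fin_borel A"
    "\<forall>(b,A)\<in>F. \<forall>(b',A')\<in>F. b = b' \<and> A \<noteq> A' \<longrightarrow> A \<inter> A' = {}"
  shows "prob_space.indep_vars M (\<lambda>_. count_space UNIV) (\<lambda>(b,A) \<omega>. card (P b \<omega> \<inter> A)) F"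
proof -
  have "\<forall>F. finite F \<longrightarrow> (\<forall>(b,A)\<in>F. b \<in> I \<and> fin_borel A) \<longrightarrow>
        (\<forall>(b,A)\<in>F. \<forall>(b',A')\<in>F. b = b' \<and> A \<noteq> A' \<longrightarrow> A \<inter> A' = {}) \<longrightarrow>
        prob_space.indep_vars M (\<lambda>_. count_space UNIV) (\<lambda>(b,A) \<omega>. card (P b \<omega> \<inter> A)) F"
    using assms(1) unfolding iid_PRM_def by (elim conjE)
  then show ?thesis using assms(2-4) by blast
qed

context prob_space
begin

lemma cnt_sets:
  assumes "iid_PRM M I P" "b \<in> I" "fin_borel A"
  shows "{\<omega>\<in>space M. Q (card (P b \<omega> \<inter> A))} \<in> events"
proof -
  have m: "(\<lambda>\<omega>. card (P b \<omega> \<inter> A)) \<in> measurable M (count_space UNIV)"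
    using assms unfolding iid_PRM_def by blast
  have "(\<lambda>\<omega>. card (P b \<omega> \<inter> A)) -` {k. Q k} \<inter> space M \<in> sets M"
    by (rule measurable_sets[OF m]) auto
  moreover have "(\<lambda>\<omega>. card (P b \<omega> \<inter> A)) -` {k. Q k} \<inter> space M = {\<omega>\<in>space M. Q (card (P b \<omega> \<inter> A))}"
    by auto
  ultimately show ?thesis by simp
qed

lemma cnt_fin:
  assumes "iid_PRM M I P" "b \<in> I" "fin_borel A"
  shows "AE \<omega> in M. finite (P b \<omega> \<inter> A)"
  using assms unfolding iid_PRM_def by blast

lemma cnt_prob:
  assumes "iid_PRM M I P" "b \<in> I" "fin_borel A"
  shows "prob {\<omega>\<in>space M. card (P b \<omega> \<inter> A) = k}
     = (measure lborel A) ^ k / fact k * exp (- measure lborel A)"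
  using assms unfolding iid_PRM_def by blast

lemma cnt_prob_less:
  assumes "iid_PRM M I P" "b \<in> I" "fin_borel A"
  shows "prob {\<omega>\<in>space M. card (P b \<omega> \<inter> A) < n}
     = (\<Sum>k<n. (measure lborel A) ^ k / fact k * exp (- measure lborel A))"
proof (induction n)
  case 0
  then show ?case by simp
next
  case (Suc n)
  have "{\<omega>\<in>space M. card (P b \<omega> \<inter> A) < Suc n} =
     {\<omega>\<in>space M. card (P b \<omega> \<inter> A) < n} \<union> {\<omega>\<in>space M. card (P b \<omega> \<inter> A) = n}"
    by auto
  then have "prob {\<omega>\<in>space M. card (P b \<omega> \<inter> A) < Suc n} =
     prob {\<omega>\<in>space M. card (P b \<omega> \<inter> A) < n} + prob {\<omega>\<in>space M. card (P b \<omega> \<inter> A) = n}"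
  proof -
    have "prob ({\<omega>\<in>space M. card (P b \<omega> \<inter> A) < n} \<union> {\<omega>\<in>space M. card (P b \<omega> \<inter> A) = n}) =
     prob {\<omega>\<in>space M. card (P b \<omega> \<inter> A) < n} + prob {\<omega>\<in>space M. card (P b \<omega> \<inter> A) = n}"
      by (rule finite_measure_Union) (use cnt_sets[OF assms] in auto)
    with \<open>_ = _ \<union> _\<close> show ?thesis by simp
  qed
  then show ?case using Suc cnt_prob[OF assms] by simp
qed

lemma cnt_prob_ge:
  assumes "iid_PRM M I P" "b \<in> I" "fin_borel A"
  shows "prob {\<omega>\<in>space M. n \<le> card (P b \<omega> \<inter> A)}
     = 1 - (\<Sum>k<n. (measure lborel A) ^ k / fact k * exp (- measure lborel A))"
proof -
  have "{\<omega>\<in>space M. n \<le> card (P b \<omega> \<inter> A)} = space M - {\<omega>\<in>space M. card (P b \<omega> \<inter> A) < n}"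
    by auto
  then show ?thesis using cnt_sets[OF assms] cnt_prob_less[OF assms] by (simp add: prob_compl)
qed

lemma cnt_ge1:
  assumes "iid_PRM M I P" "b \<in> I" "fin_borel A"
  shows "prob {\<omega>\<in>space M. 1 \<le> card (P b \<omega> \<inter> A)} \<le> measure lborel A"
proof -
  have "1 - exp (- measure lborel A) \<le> measure lborel A"
    using exp_ge_add_one_self[of "- measure lborel A"] by simp
  then show ?thesis using cnt_prob_ge[OF assms, of 1] by simp
qed

lemma cnt_ge2:
  assumes "iid_PRM M I P" "b \<in> I" "fin_borel A"
  shows "prob {\<omega>\<in>space M. 2 \<le> card (P b \<omega> \<inter> A)} \<le> (measure lborel A)^2"
proof -
  define \<mu> where "\<mu> = measure lborel A"
  have "\<mu> \<ge> 0" unfolding \<mu>_def by simp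
  have e: "exp (- \<mu>) \<ge> 1 - \<mu>" using exp_ge_add_one_self[of "- \<mu>"] by simp
  have "1 - \<mu>^2 = (1 - \<mu>) * (1 + \<mu>)" by (simp add: algebra_simps power2_eq_square)
  also have "\<dots> \<le> exp (- \<mu>) * (1 + \<mu>)" using e \<open>\<mu> \<ge> 0\<close> by (intro mult_right_mono) auto
  finally have "1 - (exp (-\<mu>) + \<mu> * exp (-\<mu>)) \<le> \<mu>^2" by (simp add: algebra_simps)
  then show ?thesis using cnt_prob_ge[OF assms, of 2] unfolding \<mu>_def
    by (simp add: numeral_2_eq_2)
qed

end



lemma interval_index:
  fixes s m :: real and K :: nat
  assumes "0 < s" "s \<le> m" "0 < K"
  shows "\<exists>j<K. real j * m / K < s \<and> s \<le> (real j + 1) * m / K"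
proof -
  have m: "m > 0" using assms by simp
  define x where "x = s * K / m"
  have x0: "0 < x" using assms m unfolding x_def by simp
  have xK: "x \<le> K" using assms m unfolding x_def by (simp add: field_simps)
  define c where "c = ceiling x"
  have c1: "c \<ge> 1" using x0 unfolding c_def by (simp add: one_le_ceiling)
  have cK: "c \<le> K" using xK unfolding c_def by (simp add: ceiling_le_iff)
  define j where "j = nat c - 1"
  have rj: "real j = real_of_int c - 1" using c1 unfolding j_def by (simp add: of_nat_diff)
  have "real_of_int c - 1 < x" unfolding c_def by linarith
  moreover have "x \<le> real_of_int c" unfolding c_def by simp
  ultimately have "real j < x" "x \<le> real j + 1" using rj by auto
  then have "real j * m / K < s" "s \<le> (real j + 1) * m / K"
    using m assms(3) unfolding x_def by (simp_all add: field_simps)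
  moreover have "j < K" using c1 cK unfolding j_def by linarith
  ultimately show ?thesis by blast
qed

context prob_space
begin

lemma G3:
  assumes iid: "iid_PRM M I P" and b: "b \<in> I" and lam: "lam > 0"
  shows "AE \<omega> in M. \<exists>m::nat. n \<le> card (P b \<omega> \<inter> ({0..real m} \<times> {0..lam}))"
proof (rule AE_I')
  define N0 where "N0 = (\<Inter>m::nat. {\<omega>\<in>space M. card (P b \<omega> \<inter> ({0..real m} \<times> {0..lam})) < n})"
  have fb: "fin_borel ({0..real m} \<times> {0..lam})" for m
    using fin_borel_box1[of 0 0 "real m" lam] lam by simp
  have mb: "measure lborel ({0..real m} \<times> {0..lam}) = real m * lam" for m
    using fin_borel_box1[of 0 0 "real m" lam] lam by simp
  have N0s: "N0 \<in> events" unfolding N0_def using cnt_sets[OF iid b fb] by auto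
  have le: "measure M N0 \<le> (\<Sum>k<n. (real m * lam) ^ k / fact k * exp (- (real m * lam)))" for m
  proof -
    have "measure M N0 \<le> prob {\<omega>\<in>space M. card (P b \<omega> \<inter> ({0..real m} \<times> {0..lam})) < n}"
      using cnt_sets[OF iid b fb] unfolding N0_def by (intro finite_measure_mono) auto
    then show ?thesis using cnt_prob_less[OF iid b fb[of m]] mb[of m] by simp
  qed
  have lim: "(\<lambda>m::nat. \<Sum>k<n. (real m * lam) ^ k / fact k * exp (- (real m * lam))) \<longlonglongrightarrow> 0"
  proof (rule tendsto_null_sum)
    fix k
    have ft: "filterlim (\<lambda>m::nat. real m * lam) at_top sequentially"
      by (rule filterlim_tendsto_pos_mult_at_top[OF tendsto_const lam filterlim_real_sequentially, THEN filterlim_cong[THEN iffD1, rotated 3]]) (auto simp: mult.commute)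
    have "(\<lambda>m::nat. (real m * lam) ^ k / exp (real m * lam)) \<longlonglongrightarrow> 0"
      by (rule filterlim_compose[OF tendsto_power_div_exp_0 ft])
    then have "(\<lambda>m::nat. (real m * lam) ^ k / exp (real m * lam) / fact k) \<longlonglongrightarrow> 0"
      by (intro tendsto_divide_zero)
    then show "(\<lambda>m::nat. (real m * lam) ^ k / fact k * exp (- (real m * lam))) \<longlonglongrightarrow> 0"
      by (simp add: exp_minus field_simps)
  qed
  have "measure M N0 \<le> 0"
    by (rule LIMSEQ_le_const[OF lim]) (use le in auto)
  then have "measure M N0 = 0" by (simp add: measure_nonneg antisym)
  then show "N0 \<in> null_sets M" using N0s by (simp add: emeasure_eq_measure null_setsI)
  show "{\<omega> \<in> space M. \<not> (\<exists>m::nat. n \<le> card (P b \<omega> \<inter> ({0..real m} \<times> {0..lam})))} \<subseteq> N0"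
    unfolding N0_def by (auto simp add: not_le)
qed

lemma G4:
  assumes iid: "iid_PRM M I P" and b: "b \<in> I" and lam: "lam > 0"
  shows "AE \<omega> in M. P b \<omega> \<inter> ({0..0} \<times> {0..lam}) = {}"
proof -
  have fb: "fin_borel ({0..0} \<times> {0..lam})" and mb: "measure lborel ({0..0::real} \<times> {0..lam}) = 0"
    using fin_borel_box1[of 0 0 0 lam] lam by simp_all
  have "prob {\<omega>\<in>space M. card (P b \<omega> \<inter> ({0..0} \<times> {0..lam})) = 0} = 1"
    using cnt_prob[OF iid b fb, of 0] mb by simp
  then have "AE \<omega> in M. \<omega> \<in> {\<omega>\<in>space M. card (P b \<omega> \<inter> ({0..0} \<times> {0..lam})) = 0}"
    by (rule AE_prob_1)
  moreover have "AE \<omega> in M. finite (P b \<omega> \<inter> ({0..0} \<times> {0..lam}))" by (rule cnt_fin[OF iid b fb])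
  ultimately show ?thesis by eventually_elim auto
qed

lemma G5:
  fixes N :: nat and P :: "nat \<Rightarrow> 'a \<Rightarrow> (real \<times> real) set"
  assumes iid: "iid_PRM M {1..N} P" and m: "0 < m"
  shows "AE \<omega> in M. \<forall>b\<in>{1..N}. \<forall>b'\<in>{1..N}. \<forall>s z z'. (s,z) \<in> P b \<omega> \<longrightarrow> (s,z') \<in> P b' \<omega> \<longrightarrow>
     0 < s \<longrightarrow> s \<le> m \<longrightarrow> 0 \<le> z \<longrightarrow> z \<le> m \<longrightarrow> 0 \<le> z' \<longrightarrow> z' \<le> m \<longrightarrow> b = b' \<and> z = z'"
proof -
  define Bx where "Bx = {0..m} \<times> {0..m}"
  have fbB: "fin_borel Bx" unfolding Bx_def using fin_borel_box1[of 0 0 m m] m by simp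
  have Fin: "AE \<omega> in M. \<forall>b\<in>{1..N}. finite (P b \<omega> \<inter> Bx)"
  proof (rule AE_ball_countable')
    show "countable {1..N}" by (rule countable_finite) simp
  qed (rule cnt_fin[OF iid _ fbB])
  define R where "R K j = {real j * m / real K<..(real j + 1) * m / real K} \<times> {0..m}" for K j :: nat
  have fbR: "fin_borel (R K j)" "measure lborel (R K j) = m * m / K" if "K > 0" for K j
  proof -
    have le: "real j * m / real K \<le> (real j + 1) * m / real K" using m that
      by (intro divide_right_mono mult_right_mono) auto
    have "0 \<le> real j * m / real K" using m by simp
    then show "fin_borel (R K j)" "measure lborel (R K j) = m * m / K"
      using fin_borel_box2[of "real j * m / real K" 0 "(real j + 1) * m / real K" m] le m that
      unfolding R_def by (auto simp: field_simps)
  qed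
  define E where "E K j b b' = (if b = b' then {\<omega>\<in>space M. 2 \<le> card (P b \<omega> \<inter> R K j)}
     else {\<omega>\<in>space M. 1 \<le> card (P b \<omega> \<inter> R K j)} \<inter> {\<omega>\<in>space M. 1 \<le> card (P b' \<omega> \<inter> R K j)})"
    for K j b b' :: nat
  define IK where "IK K = {..<K} \<times> {1..N} \<times> {1..N}" for K :: nat
  define U where "U K = (\<Union>(j,b,b')\<in>IK K. E K j b b')" for K
  define N0 where "N0 = (\<Inter>K. U (Suc K))"
  have Es: "E K j b b' \<in> events" if "K > 0" "b \<in> {1..N}" "b' \<in> {1..N}" for K j b b'
    using cnt_sets[OF iid _ fbR(1)] that unfolding E_def by auto
  have Eb: "prob (E K j b b') \<le> (m * m / K)^2" if "K > 0" "b \<in> {1..N}" "b' \<in> {1..N}" for K j b b'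
  proof (cases "b = b'")
    case True
    then show ?thesis unfolding E_def using cnt_ge2[OF iid that(2) fbR(1)[OF that(1)]] fbR(2)[OF that(1)] by simp
  next
    case False
    define X where "X = (\<lambda>(b::nat,A::(real\<times>real) set) \<omega>. card (P b \<omega> \<inter> A))"
    define F where "F = {(b, R K j), (b', R K j)}"
    have ind: "indep_vars (\<lambda>_. count_space UNIV) X F"
      unfolding X_def
    proof (rule iid_indep[OF iid])
      show "finite F" unfolding F_def by simp
      show "\<forall>(b, A)\<in>F. b \<in> {1..N} \<and> fin_borel A" using that fbR(1)[OF that(1)] unfolding F_def by simp
      show "\<forall>(b, A)\<in>F. \<forall>(b', A')\<in>F. b = b' \<and> A \<noteq> A' \<longrightarrow> A \<inter> A' = {}"
        unfolding F_def by simp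
    qed
    have "prob (\<Inter>i\<in>F. X i -` {1..} \<inter> space M) = (\<Prod>i\<in>F. prob (X i -` {1..} \<inter> space M))"
      by (rule indep_varsD[OF ind]) (auto simp: F_def)
    moreover have pre: "X (c, R K j) -` {1..} \<inter> space M = {\<omega>\<in>space M. 1 \<le> card (P c \<omega> \<inter> R K j)}" for c
      unfolding X_def by auto
    moreover have "(\<Inter>i\<in>F. X i -` {1..} \<inter> space M) = E K j b b'"
      unfolding F_def E_def using False pre by auto
    moreover have "(\<Prod>i\<in>F. prob (X i -` {1..} \<inter> space M)) =
       prob (X (b, R K j) -` {1..} \<inter> space M) * prob (X (b', R K j) -` {1..} \<inter> space M)"
      unfolding F_def using False by simp
    ultimately have "prob (E K j b b') = prob {\<omega>\<in>space M. 1 \<le> card (P b \<omega> \<inter> R K j)} * prob {\<omega>\<in>space M. 1 \<le> card (P b' \<omega> \<inter> R K j)}"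
      by simp
    also have "\<dots> \<le> (m * m / K) * (m * m / K)"
      using cnt_ge1[OF iid that(2) fbR(1)[OF that(1)]] cnt_ge1[OF iid that(3) fbR(1)[OF that(1)]] fbR(2)[OF that(1)]
      by (intro mult_mono) auto
    finally show ?thesis by (simp add: power2_eq_square)
  qed
  have Us: "U K \<in> events" if "K > 0" for K
    unfolding U_def IK_def using Es that by (intro sets.finite_UN) auto
  have Ub: "prob (U K) \<le> real N * real N * m^4 / K" if "K > 0" for K
  proof -
    have "prob (U K) \<le> (\<Sum>i\<in>IK K. prob ((\<lambda>(j,b,b'). E K j b b') i))"
      unfolding U_def
      by (rule finite_measure_subadditive_finite) (use Es that in \<open>auto simp: IK_def\<close>)
    also have "\<dots> \<le> real (card (IK K)) * (m * m / K)^2"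
      by (rule sum_bounded_above) (use Eb that in \<open>auto simp: IK_def\<close>)
    also have "\<dots> = real N * real N * m^4 / K"
      unfolding IK_def using that by (simp add: card_cartesian_product power2_eq_square field_simps eval_nat_numeral)
    finally show ?thesis .
  qed
  have N0s: "N0 \<in> events" unfolding N0_def using Us by auto
  have lim: "(\<lambda>K::nat. real N * real N * m^4 / real (Suc K)) \<longlonglongrightarrow> 0"
    by (intro tendsto_divide_0[OF tendsto_const] filterlim_at_top_imp_at_infinity filterlim_compose[OF filterlim_real_sequentially filterlim_Suc])
  have "measure M N0 \<le> 0"
  proof (rule LIMSEQ_le_const[OF lim], intro exI allI impI)
    fix K :: nat
    have "measure M N0 \<le> prob (U (Suc K))"
      unfolding N0_def using Us by (intro finite_measure_mono) auto
    also have "\<dots> \<le> real N * real N * m^4 / real (Suc K)" using Ub[of "Suc K"] by simp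
    finally show "measure M N0 \<le> real N * real N * m^4 / real (Suc K)" .
  qed
  then have "measure M N0 = 0" by (simp add: measure_nonneg antisym)
  then have N0n: "N0 \<in> null_sets M" using N0s by (simp add: emeasure_eq_measure null_setsI)
  have "AE \<omega> in M. (\<forall>b\<in>{1..N}. finite (P b \<omega> \<inter> Bx)) \<longrightarrow> (\<forall>b\<in>{1..N}. \<forall>b'\<in>{1..N}. \<forall>s z z'. (s,z) \<in> P b \<omega> \<longrightarrow> (s,z') \<in> P b' \<omega> \<longrightarrow>
     0 < s \<longrightarrow> s \<le> m \<longrightarrow> 0 \<le> z \<longrightarrow> z \<le> m \<longrightarrow> 0 \<le> z' \<longrightarrow> z' \<le> m \<longrightarrow> b = b' \<and> z = z')"
  proof (rule AE_I'[OF N0n], rule subsetI)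
    fix \<omega> assume H: "\<omega> \<in> {\<omega> \<in> space M. \<not> ((\<forall>b\<in>{1..N}. finite (P b \<omega> \<inter> Bx)) \<longrightarrow> (\<forall>b\<in>{1..N}. \<forall>b'\<in>{1..N}. \<forall>s z z'. (s,z) \<in> P b \<omega> \<longrightarrow> (s,z') \<in> P b' \<omega> \<longrightarrow>
     0 < s \<longrightarrow> s \<le> m \<longrightarrow> 0 \<le> z \<longrightarrow> z \<le> m \<longrightarrow> 0 \<le> z' \<longrightarrow> z' \<le> m \<longrightarrow> b = b' \<and> z = z'))}"
    then have \<omega>: "\<omega> \<in> space M" and fin: "\<forall>b\<in>{1..N}. finite (P b \<omega> \<inter> Bx)"
      and "\<exists>b\<in>{1..N}. \<exists>b'\<in>{1..N}. \<exists>s z z'. (s,z) \<in> P b \<omega> \<and> (s,z') \<in> P b' \<omega> \<and>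
     0 < s \<and> s \<le> m \<and> 0 \<le> z \<and> z \<le> m \<and> 0 \<le> z' \<and> z' \<le> m \<and> \<not> (b = b' \<and> z = z')"
      by blast+
    then obtain b b' s z z' where 
      b: "b \<in> {1..N}" "b' \<in> {1..N}" and sz: "(s,z) \<in> P b \<omega>" "(s,z') \<in> P b' \<omega>"
      and ineq: "0 < s" "s \<le> m" "0 \<le> z" "z \<le> m" "0 \<le> z'" "z' \<le> m"
      and neq: "\<not> (b = b' \<and> z = z')" by blast
    show "\<omega> \<in> N0" unfolding N0_def
    proof
      fix K :: nat
      obtain j where j: "j < Suc K" "real j * m / real (Suc K) < s" "s \<le> (real j + 1) * m / real (Suc K)"
        using interval_index[OF ineq(1,2), of "Suc K"] by auto
      have inR: "(s,z) \<in> R (Suc K) j" "(s,z') \<in> R (Suc K) j" using j ineq unfolding R_def by auto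
      have RB: "R (Suc K) j \<subseteq> Bx"
      proof
        fix x assume xR: "x \<in> R (Suc K) j"
        have a0: "0 \<le> real j * m / real (Suc K)" using m by simp
        have a1: "(real j + 1) * m / real (Suc K) \<le> m"
          using j(1) m by (simp add: field_simps)
        from xR have "real j * m / real (Suc K) < fst x" "fst x \<le> (real j + 1) * m / real (Suc K)"
          "0 \<le> snd x" "snd x \<le> m" unfolding R_def by auto
        then have "0 \<le> fst x" "fst x \<le> m" "0 \<le> snd x" "snd x \<le> m" using a0 a1 by linarith+
        then show "x \<in> Bx" unfolding Bx_def by (simp add: mem_Times_iff)
      qed
      have finR: "finite (P c \<omega> \<inter> R (Suc K) j)" if "c \<in> {1..N}" for c
        using fin that RB by (meson finite_subset inf_mono order_refl)
      have "\<omega> \<in> E (Suc K) j b b'"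
      proof (cases "b = b'")
        case True
        then have "z \<noteq> z'" using neq by simp
        have "{(s,z),(s,z')} \<subseteq> P b \<omega> \<inter> R (Suc K) j" using sz inR True by auto
        then have "card {(s,z),(s,z')} \<le> card (P b \<omega> \<inter> R (Suc K) j)"
          using finR[OF b(1)] by (rule card_mono[rotated])
        then have "2 \<le> card (P b \<omega> \<inter> R (Suc K) j)" using \<open>z \<noteq> z'\<close> by simp
        then show ?thesis unfolding E_def using True \<omega> by simp
      next
        case False
        have "P b \<omega> \<inter> R (Suc K) j \<noteq> {}" "P b' \<omega> \<inter> R (Suc K) j \<noteq> {}" using sz inR by auto
        then have "1 \<le> card (P b \<omega> \<inter> R (Suc K) j)" "1 \<le> card (P b' \<omega> \<inter> R (Suc K) j)"
          using finR b by (auto simp: Suc_le_eq card_gt_0_iff)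
        then show ?thesis unfolding E_def using False \<omega> by simp
      qed
      moreover have "(j,b,b') \<in> IK (Suc K)" using j b unfolding IK_def by auto
      ultimately show "\<omega> \<in> U (Suc K)" unfolding U_def by blast
    qed
  qed
  with Fin show ?thesis by (rule AE_mp)
qed

end


lemma core:
  assumes sol: "solves_system N h \<phi> Q U" and a: "a \<in> {1..N}" and T: "T > 0"
    and atom: "(T, z0) \<in> Q a" and z0: "z0 \<le> Mgt \<phi> l" and phi: "\<And>x. \<phi> x \<ge> 0"
    and nc: "\<And>b z. b \<in> {1..N} \<Longrightarrow> (T, z) \<in> Q b \<Longrightarrow> b = a \<and> z = z0"
    and l0: "0 \<le> l"
  shows "\<bar>U T a\<bar> \<le> l"
proof -
  define AA where "AA b t = active_atoms \<phi> (Q b) (\<lambda>s. U s b) t" for b t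
  define f where "f = (\<lambda>(s,z). left_lim (\<lambda>s. U s a) s * (if z \<le> Phi \<phi> (left_lim (\<lambda>s. U s a) s) then 1 else 0::real))"
  define g where "g b = (\<lambda>(s,z). (if z \<le> \<phi> (left_lim (\<lambda>s. U s b) s) then 1 else 0)
                - (if \<phi> (left_lim (\<lambda>s. U s b) s) < z \<and> z \<le> Phi \<phi> (left_lim (\<lambda>s. U s b) s)
                   then 1 else 0::real))" for b
  have fin: "finite (AA b T)" if "b \<in> {1..N}" for b
    using sol that T unfolding solves_system_def AA_def by auto
  have eq: "U t a = U 0 a - sum f (AA a t) + h / real N * (\<Sum>b\<in>{1..N} - {a}. sum (g b) (AA b t))"
    if "t \<ge> 0" for t
    using sol a that unfolding solves_system_def AA_def f_def g_def by blast
  define AL where "AL b = {x \<in> AA b T. fst x < T}" for b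
  define Sm where "Sm = (\<Union>b\<in>{1..N}. fst ` AL b)"
  have "finite Sm" using fin unfolding Sm_def AL_def by auto
  define t0 where "t0 = Max (insert 0 Sm)"
  have t0T: "t0 < T"
  proof -
    have "\<forall>x\<in>insert 0 Sm. x < T" using T unfolding Sm_def AL_def by auto
    then show ?thesis unfolding t0_def using \<open>finite Sm\<close> by (subst Max_less_iff) auto
  qed
  have t0: "0 \<le> t0" unfolding t0_def using \<open>finite Sm\<close> by simp
  have AAt: "AA b t = AL b" if "b \<in> {1..N}" "t0 < t" "t < T" for b t
  proof
    show "AA b t \<subseteq> AL b" using that unfolding AL_def AA_def active_atoms_def by auto
    show "AL b \<subseteq> AA b t"
    proof
      fix x assume x: "x \<in> AL b"
      then have "fst x \<in> Sm" unfolding Sm_def using that(1) by blast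
      then have "fst x \<le> t0" unfolding t0_def using \<open>finite Sm\<close> by simp
      then show "x \<in> AA b t" using x that unfolding AL_def AA_def active_atoms_def by auto
    qed
  qed
  define C where "C = U 0 a - sum f (AL a) + h / real N * (\<Sum>b\<in>{1..N} - {a}. sum (g b) (AL b))"
  have UC: "U t a = C" if "t0 < t" "t < T" for t
  proof -
    have "(\<Sum>b\<in>{1..N} - {a}. sum (g b) (AA b t)) = (\<Sum>b\<in>{1..N} - {a}. sum (g b) (AL b))"
      using AAt that by (intro sum.cong) auto
    then show ?thesis using eq[of t] AAt[OF a that] t0 that unfolding C_def by simp
  qed
  have LL: "left_lim (\<lambda>s. U s a) T = C"
  proof -
    have "eventually (\<lambda>t. t \<in> {t0<..<T}) (at_left T)"
      using t0T by (rule eventually_at_left_real)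
    then have "eventually (\<lambda>t. U t a = C) (at_left T)"
      by eventually_elim (use UC in auto)
    then have "((\<lambda>s. U s a) \<longlongrightarrow> C) (at_left T)" by (rule tendsto_eventually)
    then show ?thesis unfolding left_lim_def using T by (simp add: tendsto_Lim)
  qed
  have AAT: "AA b T = AL b \<union> {x \<in> AA b T. fst x = T}" for b
    unfolding AL_def AA_def active_atoms_def by auto
  have Eb: "{x \<in> AA b T. fst x = T} = {}" if "b \<in> {1..N} - {a}" for b
  proof -
    { fix x assume "x \<in> AA b T" "fst x = T"
      then have "(T, snd x) \<in> Q b" unfolding AA_def active_atoms_def by auto
      then have False using nc[of b "snd x"] that by auto }
    then show ?thesis by (metis (mono_tags, lifting) Collect_empty_eq)
  qed
  have Ea: "{x \<in> AA a T. fst x = T} = (if z0 \<le> Phi \<phi> C then {(T,z0)} else {})"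
  proof -
    { fix x assume "x \<in> AA a T" "fst x = T"
      then have "(T, snd x) \<in> Q a" unfolding AA_def active_atoms_def by auto
      then have "snd x = z0" using nc[of a "snd x"] a by auto }
    then have sub: "{x \<in> AA a T. fst x = T} \<subseteq> {(T,z0)}" by (metis (mono_tags, lifting) mem_Collect_eq prod.collapse singletonI subsetI)
    have mem: "(T,z0) \<in> AA a T \<longleftrightarrow> z0 \<le> Phi \<phi> C"
      unfolding AA_def active_atoms_def using atom T LL by simp
    show ?thesis
    proof (cases "z0 \<le> Phi \<phi> C")
      case True
      then have "(T,z0) \<in> {x \<in> AA a T. fst x = T}" using mem by simp
      then have "{x \<in> AA a T. fst x = T} = {(T,z0)}" using sub by blast
      then show ?thesis using True by simp
    next
      case False
      then have "(T,z0) \<notin> {x \<in> AA a T. fst x = T}" using mem by simp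
      then have "{x \<in> AA a T. fst x = T} = {}" using subset_singletonD[OF sub] by (metis singletonI)
      then show ?thesis using False by simp
    qed
  qed
  have disj: "AL b \<inter> {x \<in> AA b T. fst x = T} = {}" for b unfolding AL_def by auto
  have UT: "U T a = C - sum f {x \<in> AA a T. fst x = T}"
  proof -
    have "sum f (AA a T) = sum f (AL a) + sum f {x \<in> AA a T. fst x = T}"
      using AAT[of a] disj[of a] fin[OF a] by (metis finite_Un sum.union_disjoint)
    moreover have "(\<Sum>b\<in>{1..N} - {a}. sum (g b) (AA b T)) = (\<Sum>b\<in>{1..N} - {a}. sum (g b) (AL b))"
    proof (rule sum.cong[OF refl])
      fix b assume b: "b \<in> {1..N} - {a}"
      have "AA b T = AL b" using AAT[of b] Eb[OF b] by simp
      then show "sum (g b) (AA b T) = sum (g b) (AL b)" by simp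
    qed
    ultimately show ?thesis using eq[of T] T unfolding C_def by simp
  qed
  have Mle: "Mgt \<phi> l \<le> Phi \<phi> r" if "r > l" for r
    unfolding Mgt_def
  proof (rule cInf_lower)
    show "Phi \<phi> r \<in> Phi \<phi> ` {l<..}" using that by auto
    show "bdd_below (Phi \<phi> ` {l<..})"
      by (rule bdd_belowI[of _ 0]) (auto simp: Phi_def intro: add_nonneg_nonneg phi)
  qed
  show ?thesis
  proof (cases "z0 \<le> Phi \<phi> C")
    case True
    then have "U T a = 0" using UT Ea LL unfolding f_def by simp
    then show ?thesis using \<open>U T a = 0\<close> l0 by simp
  next
    case False
    then have UTC: "U T a = C" using UT Ea by simp
    show ?thesis
    proof (rule ccontr)
      assume "\<not> \<bar>U T a\<bar> \<le> l"
      then have "\<bar>C\<bar> > l" using UTC by simp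
      have "Phi \<phi> C = Phi \<phi> \<bar>C\<bar>" unfolding Phi_def by (cases "C \<ge> 0") auto
      also have "\<dots> \<ge> Mgt \<phi> l" using Mle \<open>\<bar>C\<bar> > l\<close> by simp
      finally show False using z0 False by simp
    qed
  qed
qed

lemma jump_time_atom:
  assumes fin: "\<And>t. finite (Q \<inter> ({0..t} \<times> {0..lam}))" and n: "n \<ge> 1"
    and ex: "0 \<le> t1" "n \<le> card (Q \<inter> ({0..t1} \<times> {0..lam}))"
  shows "\<exists>z. (jump_time Q lam n, z) \<in> Q \<and> 0 \<le> jump_time Q lam n \<and> 0 \<le> z \<and> z \<le> lam"
proof -
  define S where "S = {t. 0 \<le> t \<and> n \<le> card (Q \<inter> ({0..t} \<times> {0..lam}))}"
  define A where "A = Q \<inter> ({0..t1} \<times> {0..lam})"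
  have finA: "finite A" using fin unfolding A_def by simp
  have sub: "Q \<inter> ({0..t} \<times> {0..lam}) = {x \<in> A. fst x \<le> t}" if "t \<le> t1" for t
    using that unfolding A_def by auto
  define Ts where "Ts = {s \<in> fst ` A. s \<in> S}"
  have key: "\<exists>t'\<in>Ts. t' \<le> t" if "t \<in> S" "t \<le> t1" for t
  proof -
    define B where "B = {x \<in> A. fst x \<le> t}"
    have "finite B" using finA unfolding B_def by simp
    have "n \<le> card B" using that sub unfolding S_def B_def by auto
    then have "B \<noteq> {}" using n by auto
    define t' where "t' = Max (fst ` B)"
    have t'B: "t' \<in> fst ` B" unfolding t'_def using \<open>finite B\<close> \<open>B \<noteq> {}\<close> by simp
    have "t' \<le> t" using t'B unfolding B_def by auto
    have "{x \<in> A. fst x \<le> t'} = B"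
    proof
      show "{x \<in> A. fst x \<le> t'} \<subseteq> B" using \<open>t' \<le> t\<close> unfolding B_def by auto
      show "B \<subseteq> {x \<in> A. fst x \<le> t'}"
      proof
        fix x assume "x \<in> B"
        then have "fst x \<le> t'" unfolding t'_def using \<open>finite B\<close> by (intro Max_ge) auto
        then show "x \<in> {x \<in> A. fst x \<le> t'}" using \<open>x \<in> B\<close> unfolding B_def by auto
      qed
    qed
    moreover have "0 \<le> t'" using t'B unfolding B_def A_def by auto
    moreover have "t' \<le> t1" using \<open>t' \<le> t\<close> that by simp
    ultimately have "t' \<in> S" using \<open>n \<le> card B\<close> sub[of t'] unfolding S_def by auto
    moreover have "t' \<in> fst ` A" using t'B unfolding B_def by auto
    ultimately show ?thesis using \<open>t' \<le> t\<close> unfolding Ts_def by auto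
  qed
  have "t1 \<in> S" using ex unfolding S_def by auto
  then obtain t' where "t' \<in> Ts" using key by auto
  have "finite Ts" using finA unfolding Ts_def by simp
  define T where "T = Min Ts"
  have TTs: "T \<in> Ts" unfolding T_def using \<open>finite Ts\<close> \<open>t' \<in> Ts\<close> by (intro Min_in) auto
  have "Inf S = T"
  proof (rule cInf_eq_minimum)
    show "T \<in> S" using TTs unfolding Ts_def by auto
    fix x assume "x \<in> S"
    show "T \<le> x"
    proof (cases "x \<le> t1")
      case True
      then obtain t'' where "t'' \<in> Ts" "t'' \<le> x" using key \<open>x \<in> S\<close> by blast
      then show ?thesis unfolding T_def using \<open>finite Ts\<close> by (meson Min_le order_trans)
    next
      case False
      have "T \<le> t1" using TTs unfolding Ts_def A_def by auto
      then show ?thesis using False by simp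
    qed
  qed
  then have "jump_time Q lam n = T" unfolding jump_time_def S_def by simp
  then show ?thesis using TTs unfolding Ts_def A_def by force
qed



theorem proposition4:
  fixes M :: "'w measure" and N :: nat and h l :: real and a :: nat
    and \<phi> :: "real \<Rightarrow> real"
    and P :: "nat \<Rightarrow> 'w \<Rightarrow> (real \<times> real) set"
    and U :: "real \<Rightarrow> 'w \<Rightarrow> nat \<Rightarrow> real"
  assumes "prob_space M"
    and "h > 0" and "N \<ge> 2" and "a \<in> {1..N}"
    and "\<And>x. \<phi> x \<ge> 0"
    and "iid_PRM M {1..N} P"
    and "AE \<omega> in M. solves_system N h \<phi> (\<lambda>b. P b \<omega>) (\<lambda>t. U t \<omega>)"
    and "l > 0" and "Mgt \<phi> l > 0"
  shows "AE \<omega> in M. \<forall>n\<ge>1. \<bar>U (jump_time (P a \<omega>) (Mgt \<phi> l) n) \<omega> a\<bar> \<le> l"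
proof -
  interpret prob_space M by fact
  note iid = assms(6) and a = assms(4) and phi = assms(5)
  have l0: "0 \<le> l" using assms(8) by simp
  define lam where "lam = Mgt \<phi> l"
  have lam: "lam > 0" using assms(9) unfolding lam_def .
  have fbA: "fin_borel ({0..real m} \<times> {0..lam})" for m
    using fin_borel_box1[of 0 0 "real m" lam] lam by simp
  have G2: "AE \<omega> in M. \<forall>m::nat. finite (P a \<omega> \<inter> ({0..real m} \<times> {0..lam}))"
    unfolding AE_all_countable using cnt_fin[OF iid a fbA] by blast
  have G3: "AE \<omega> in M. \<forall>n::nat. \<exists>m::nat. n \<le> card (P a \<omega> \<inter> ({0..real m} \<times> {0..lam}))"
    unfolding AE_all_countable using G3[OF iid a lam] by blast
  have G4: "AE \<omega> in M. P a \<omega> \<inter> ({0..0} \<times> {0..lam}) = {}"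
    by (rule G4[OF iid a lam])
  have G5: "AE \<omega> in M. \<forall>m::nat. \<forall>b\<in>{1..N}. \<forall>b'\<in>{1..N}. \<forall>s z z'. (s,z) \<in> P b \<omega> \<longrightarrow> (s,z') \<in> P b' \<omega> \<longrightarrow>
     0 < s \<longrightarrow> s \<le> real (Suc m) \<longrightarrow> 0 \<le> z \<longrightarrow> z \<le> real (Suc m) \<longrightarrow> 0 \<le> z' \<longrightarrow> z' \<le> real (Suc m) \<longrightarrow> b = b' \<and> z = z'"
    unfolding AE_all_countable using G5[OF iid] by simp
  have quad: "\<forall>b\<in>{1..N}. \<forall>\<omega>\<in>space M. P b \<omega> \<subseteq> quadrant" using iid unfolding iid_PRM_def by blast
  show ?thesis using assms(7) G2 G3 G4 G5 AE_space
  proof eventually_elim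
    case (elim \<omega>)
    note sol = elim(1) and fin = elim(2) and ex = elim(3) and no0 = elim(4) and nc = elim(5) and sp = elim(6)
    show ?case
    proof (intro allI impI)
      fix n :: nat assume n: "n \<ge> 1"
      define T where "T = jump_time (P a \<omega>) lam n"
      have finT: "finite (P a \<omega> \<inter> ({0..t} \<times> {0..lam}))" for t
      proof -
        have "{0..t} \<subseteq> {0..real (nat \<lceil>t\<rceil>)}" using real_nat_ceiling_ge[of t] by auto
        then have "P a \<omega> \<inter> ({0..t} \<times> {0..lam}) \<subseteq> P a \<omega> \<inter> ({0..real (nat \<lceil>t\<rceil>)} \<times> {0..lam})"
          by blast
        moreover have "finite (P a \<omega> \<inter> ({0..real (nat \<lceil>t\<rceil>)} \<times> {0..lam}))"
          using fin by blast
        ultimately show ?thesis by (rule finite_subset)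
      qed
      obtain m where m: "n \<le> card (P a \<omega> \<inter> ({0..real m} \<times> {0..lam}))" using ex by blast
      have "0 \<le> real m" by simp
      from jump_time_atom[OF finT n this m]
      obtain z0 where z0: "(T, z0) \<in> P a \<omega>" "0 \<le> T" "0 \<le> z0" "z0 \<le> lam"
        unfolding T_def by blast
      have "T \<noteq> 0"
      proof
        assume "T = 0"
        then have "(T, z0) \<in> P a \<omega> \<inter> ({0..0} \<times> {0..lam})" using z0 by auto
        then show False using no0 by (metis empty_iff)
      qed
      then have T0: "T > 0" using z0(2) by simp
      have ncT: "b = a \<and> z = z0" if "b \<in> {1..N}" "(T, z) \<in> P b \<omega>" for b z
      proof -
        have "P b \<omega> \<subseteq> quadrant" using quad that(1) sp by blast
        then have "0 \<le> z" using that(2) unfolding quadrant_def by blast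
        define k where "k = nat \<lceil>max T (max z z0)\<rceil>"
        have "max T (max z z0) \<le> real k" unfolding k_def by (rule real_nat_ceiling_ge)
        then have "T \<le> real (Suc k)" "z \<le> real (Suc k)" "z0 \<le> real (Suc k)" by auto
        have h: "(T,z) \<in> P b \<omega> \<longrightarrow> (T,z0) \<in> P a \<omega> \<longrightarrow> 0 < T \<longrightarrow> T \<le> real (Suc k) \<longrightarrow> 0 \<le> z \<longrightarrow>
            z \<le> real (Suc k) \<longrightarrow> 0 \<le> z0 \<longrightarrow> z0 \<le> real (Suc k) \<longrightarrow> b = a \<and> z = z0"
          using spec[OF spec[OF spec[OF bspec[OF bspec[OF spec[OF nc, of k] that(1)] a], of T], of z], of z0] .
        show ?thesis
          using h that(2) z0 T0 \<open>0 \<le> z\<close> \<open>T \<le> real (Suc k)\<close> \<open>z \<le> real (Suc k)\<close> \<open>z0 \<le> real (Suc k)\<close>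
          by blast
      qed
      have "\<bar>U T \<omega> a\<bar> \<le> l"
        by (rule core[where Q="\<lambda>b. P b \<omega>" and U="\<lambda>t. U t \<omega>", OF sol a T0 z0(1) _ phi ncT l0]) (use z0(4) in \<open>simp add: lam_def\<close>)
      then show "\<bar>U (jump_time (P a \<omega>) (Mgt \<phi> l) n) \<omega> a\<bar> \<le> l"
        unfolding T_def lam_def .
    qed
  qed
qed

end
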